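(* Let $(X,d)$ be a totally bounded metric space with II-modulus of total boundedness $\gamma$, let $\emptyset\ne F\subseteq X$ with a representation $(\tilde F_k)$, and let $G,H:\mathbb{R}_+\to\mathbb{R}_+$ have a $G$-modulus $\alpha_G$ and an $H$-modulus $\beta_H$. Let $(x_n)$ be a sequence in $X$ such that (1) $(x_n)$ is uniformly $(G,H)$-Fej\'er monotone w.r.t. $F$ with modulus $\chi$, and (2) $(x_n)$ has approximate $F$-points with $\Phi$ an approximate $F$-point bound. Then $(x_n)$ is Cauchy and, moreover, for all $k\in\mathbb{N}$ and all $g:\mathbb{N}\to\mathbb{N}$ there exists $N\le\Psi(k,g,\Phi,\chi,\alpha_G,\beta_H,\gamma)$ such that $d(x_i,x_j)\le\frac1{k+1}$ for all $i,j\in[N,N+g(N)]$, where $\Psi(k,g,\Phi,\chi,\alpha_G,\beta_H,\gamma):=\Psi_0(P)$ with $P:=\gamma(\alpha_G(2\beta_H(2k+1)+1))$, $\chi_g(n,r):=\chi(n,g(n),r)$, $\chi_g^M(n,r):=\max\{\chi_g(i,r)\mid i\le n\}$, and $$\Psi_0(0):=0,\qquad \Psi_0(n+1):=\Phi\Big(\chi_g^M\big(\Psi_0(n),\,2\beta_H(2k+1)+1\big)\Big).$$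
   Context: $\mathbb{N}$ includes $0$; $\mathbb{R}_+$ the nonnegative reals. A II-modulus of total boundedness for $X$ is $\gamma:\mathbb{N}\to\mathbb{N}$ such that for every $k$ and every sequence $(y_n)$ in $X$ there are $0\le i<j\le\gamma(k)$ with $d(y_i,y_j)\le\frac1{k+1}$. A representation of $F$ is a family of sets $\tilde F_k\subseteq X$ with $F=\bigcap_k\tilde F_k$; $AF_k:=\bigcap_{l\le k}\tilde F_l$. A $G$-modulus is $\alpha_G:\mathbb{N}\to\mathbb{N}$ with: for all $k$ and $a\in\mathbb{R}_+$, $a\le\frac1{\alpha_G(k)+1}$ implies $G(a)\le\frac1{k+1}$. An $H$-modulus is $\beta_H:\mathbb{N}\to\mathbb{N}$ with: for all $k$ and $a\in\mathbb{R}_+$, $H(a)\le\frac1{\beta_H(k)+1}$ implies $a\le\frac1{k+1}$. $(x_n)$ is uniformly $(G,H)$-Fej\'er monotone w.r.t. $F$ with modulus $\chi:\mathbb{N}^3\to\mathbb{N}$ if for all $r,n,m\in\mathbb{N}$ and all $p\in X$ with $p\in AF_{\chi(n,m,r)}$ one has $H(d(x_{n+l},p))<G(d(x_n,p))+\frac1{r+1}$ for all $l\le m$. $(x_n)$ has approximate $F$-points if for every $k$ some $x_N\in AF_k$; an approximate $F$-point bound is a monotone nondecreasing $\Phi:\mathbb{N}\to\mathbb{N}$ such that for every $k$ there is $N\le\Phi(k)$ with $x_N\in AF_k$ (the paper assumes throughout that approximate $F$-point bounds are nondecreasing). *)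

theory Defs
  imports "HOL-Analysis.Analysis"
begin

definition II_modulus :: "'a::metric_space set \<Rightarrow> (nat \<Rightarrow> nat) \<Rightarrow> bool" where
  "II_modulus X \<gamma> \<longleftrightarrow> (\<forall>k. \<forall>y::nat \<Rightarrow> 'a. (\<forall>n. y n \<in> X) \<longrightarrow>
     (\<exists>i j. i < j \<and> j \<le> \<gamma> k \<and> dist (y i) (y j) \<le> 1 / (real k + 1)))"

definition is_representation :: "'a set \<Rightarrow> 'a set \<Rightarrow> (nat \<Rightarrow> 'a set) \<Rightarrow> bool" where
  "is_representation X F Ft \<longleftrightarrow> (\<forall>k. Ft k \<subseteq> X) \<and> F = (\<Inter>k. Ft k)"

definition AF :: "(nat \<Rightarrow> 'a set) \<Rightarrow> nat \<Rightarrow> 'a set" where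
  "AF Ft k = (\<Inter>l\<in>{..k}. Ft l)"

definition G_modulus :: "(real \<Rightarrow> real) \<Rightarrow> (nat \<Rightarrow> nat) \<Rightarrow> bool" where
  "G_modulus G \<alpha> \<longleftrightarrow> (\<forall>k. \<forall>a\<ge>0. a \<le> 1 / (real (\<alpha> k) + 1) \<longrightarrow> G a \<le> 1 / (real k + 1))"

definition H_modulus :: "(real \<Rightarrow> real) \<Rightarrow> (nat \<Rightarrow> nat) \<Rightarrow> bool" where
  "H_modulus H \<beta> \<longleftrightarrow> (\<forall>k. \<forall>a\<ge>0. H a \<le> 1 / (real (\<beta> k) + 1) \<longrightarrow> a \<le> 1 / (real k + 1))"

definition unif_GH_fejer :: "'a::metric_space set \<Rightarrow> (nat \<Rightarrow> 'a set) \<Rightarrow> (real \<Rightarrow> real) \<Rightarrow> (real \<Rightarrow> real)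
    \<Rightarrow> (nat \<Rightarrow> 'a) \<Rightarrow> (nat \<Rightarrow> nat \<Rightarrow> nat \<Rightarrow> nat) \<Rightarrow> bool" where
  "unif_GH_fejer X Ft G H x chi \<longleftrightarrow> (\<forall>r n m. \<forall>p\<in>X. p \<in> AF Ft (chi n m r) \<longrightarrow>
     (\<forall>l\<le>m. H (dist (x (n + l)) p) < G (dist (x n) p) + 1 / (real r + 1)))"

definition has_approx_F_points :: "(nat \<Rightarrow> 'a set) \<Rightarrow> (nat \<Rightarrow> 'a) \<Rightarrow> bool" where
  "has_approx_F_points Ft x \<longleftrightarrow> (\<forall>k. \<exists>N. x N \<in> AF Ft k)"

definition approx_F_point_bound :: "(nat \<Rightarrow> 'a set) \<Rightarrow> (nat \<Rightarrow> 'a) \<Rightarrow> (nat \<Rightarrow> nat) \<Rightarrow> bool" where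
  "approx_F_point_bound Ft x \<Phi> \<longleftrightarrow> mono \<Phi> \<and> (\<forall>k. \<exists>N\<le>\<Phi> k. x N \<in> AF Ft k)"

definition chiM :: "(nat \<Rightarrow> nat \<Rightarrow> nat \<Rightarrow> nat) \<Rightarrow> (nat \<Rightarrow> nat) \<Rightarrow> nat \<Rightarrow> nat \<Rightarrow> nat" where
  "chiM chi g n r = Max ((\<lambda>i. chi i (g i) r) ` {..n})"

primrec Psi0 :: "(nat \<Rightarrow> nat) \<Rightarrow> (nat \<Rightarrow> nat \<Rightarrow> nat \<Rightarrow> nat) \<Rightarrow> (nat \<Rightarrow> nat) \<Rightarrow> nat \<Rightarrow> nat \<Rightarrow> nat" where
  "Psi0 \<Phi> chi g c 0 = 0"
| "Psi0 \<Phi> chi g c (Suc n) = \<Phi> (chiM chi g (Psi0 \<Phi> chi g c n) c)"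

definition Psi :: "nat \<Rightarrow> (nat \<Rightarrow> nat) \<Rightarrow> (nat \<Rightarrow> nat) \<Rightarrow> (nat \<Rightarrow> nat \<Rightarrow> nat \<Rightarrow> nat)
    \<Rightarrow> (nat \<Rightarrow> nat) \<Rightarrow> (nat \<Rightarrow> nat) \<Rightarrow> (nat \<Rightarrow> nat) \<Rightarrow> nat" where
  "Psi k g \<Phi> chi \<alpha> \<beta> \<gamma> =
     Psi0 \<Phi> chi g (2 * \<beta> (2 * k + 1) + 1) (\<gamma> (\<alpha> (2 * \<beta> (2 * k + 1) + 1)))"

end

theory Submission
  imports Defs
begin

lemma chiM_ge: "i \<le> n \<Longrightarrow> chi i (g i) r \<le> chiM chi g n r"
  unfolding chiM_def by (rule Max_ge) auto

lemma chiM_mono: "n \<le> n' \<Longrightarrow> chiM chi g n r \<le> chiM chi g n' r"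
  unfolding chiM_def by (rule Max_mono) auto

lemma Psi0_mono:
  assumes "mono \<Phi>" shows "m \<le> n \<Longrightarrow> Psi0 \<Phi> chi g c m \<le> Psi0 \<Phi> chi g c n"
proof -
  have "Psi0 \<Phi> chi g c n \<le> Psi0 \<Phi> chi g c (Suc n)" for n
  proof (induction n)
    case 0 then show ?case by simp
  next
    case (Suc n)
    then show ?case using assms chiM_mono by (simp add: monoD)
  qed
  then show "m \<le> n \<Longrightarrow> Psi0 \<Phi> chi g c m \<le> Psi0 \<Phi> chi g c n"
    by (rule lift_Suc_mono_le)
qed

lemma AF_anti: "k \<le> k' \<Longrightarrow> AF Ft k' \<subseteq> AF Ft k"
  unfolding AF_def by auto

lemma quant:
  fixes X :: "'a::metric_space set" and Ft :: "nat \<Rightarrow> 'a set"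
    and \<gamma> \<alpha> \<beta> \<Phi> :: "nat \<Rightarrow> nat" and G H :: "real \<Rightarrow> real"
    and x :: "nat \<Rightarrow> 'a" and chi :: "nat \<Rightarrow> nat \<Rightarrow> nat \<Rightarrow> nat"
  assumes tb: "II_modulus X \<gamma>"
    and Gm: "G_modulus G \<alpha>" and Hm: "H_modulus H \<beta>"
    and xX: "\<forall>n. x n \<in> X"
    and fej: "unif_GH_fejer X Ft G H x chi"
    and ab: "approx_F_point_bound Ft x \<Phi>"
  shows "\<exists>N \<le> Psi k g \<Phi> chi \<alpha> \<beta> \<gamma>.
       \<forall>i j. N \<le> i \<and> i \<le> N + g N \<and> N \<le> j \<and> j \<le> N + g N \<longrightarrow>
         dist (x i) (x j) \<le> 1 / (real k + 1)"
proof -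
  define c where "c = 2 * \<beta> (2 * k + 1) + 1"
  have monoP: "mono \<Phi>" using ab unfolding approx_F_point_bound_def by auto
  have "\<forall>K. \<exists>N. N \<le> \<Phi> K \<and> x N \<in> AF Ft K" using ab unfolding approx_F_point_bound_def by auto
  then obtain h where h: "\<And>K. h K \<le> \<Phi> K" "\<And>K. x (h K) \<in> AF Ft K" by metis
  define Q where "Q = Psi0 \<Phi> chi g c"
  define m where "m i = (case i of 0 \<Rightarrow> 0 | Suc j \<Rightarrow> h (chiM chi g (Q j) c))" for i
  have mle: "m i \<le> Q i" for i
    using h(1) by (cases i) (auto simp: m_def Q_def)
  have Qmono: "a \<le> b \<Longrightarrow> Q a \<le> Q b" for a b unfolding Q_def using Psi0_mono[OF monoP] by blast
  obtain i j where ij: "i < j" "j \<le> \<gamma> (\<alpha> c)" "dist (x (m i)) (x (m j)) \<le> 1 / (real (\<alpha> c) + 1)"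
  proof -
    have xm: "\<And>n. x (m n) \<in> X" using xX by simp
    have "\<forall>k y. (\<forall>n. y n \<in> X) \<longrightarrow>
     (\<exists>i j. i < j \<and> j \<le> \<gamma> k \<and> dist (y i) (y j) \<le> 1 / (real k + 1))"
      using tb unfolding II_modulus_def .
    from this[rule_format, where k="\<alpha> c" and y="\<lambda>n. x (m n)", OF xm]
    obtain i j where "i < j" "j \<le> \<gamma> (\<alpha> c)" "dist (x (m i)) (x (m j)) \<le> 1 / (real (\<alpha> c) + 1)"
      by blast
    then show ?thesis by (rule that)
  qed
  define N where "N = m i"
  define p where "p = x (m j)"
  obtain j' where j': "j = Suc j'" using ij(1) by (cases j) auto
  have "i \<le> j'" using ij j' by simp
  hence "N \<le> Q j'" using mle[of i] Qmono[of i j'] unfolding N_def by linarith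
  hence le1: "chi N (g N) c \<le> chiM chi g (Q j') c" by (rule chiM_ge)
  have p1: "p \<in> AF Ft (chiM chi g (Q j') c)" using h(2) by (simp add: p_def m_def j')
  have pA: "p \<in> AF Ft (chi N (g N) c)" using AF_anti[OF le1] p1 by (rule subsetD)
  have Gd: "G (dist (x N) p) \<le> 1 / (real c + 1)"
  proof -
    have "\<forall>k. \<forall>a\<ge>0. a \<le> 1 / (real (\<alpha> k) + 1) \<longrightarrow> G a \<le> 1 / (real k + 1)"
      using Gm unfolding G_modulus_def .
    from this[rule_format, where k=c and a="dist (x (m i)) (x (m j))", OF zero_le_dist ij(3)]
    show ?thesis unfolding N_def p_def .
  qed
  have close: "dist (x l) p \<le> 1 / (2 * real k + 2)" if "N \<le> l" "l \<le> N + g N" for l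
  proof -
    define d where "d = l - N"
    have d: "l = N + d" "d \<le> g N" using that unfolding d_def by linarith+
    have "H (dist (x (N + d)) p) < G (dist (x N) p) + 1 / (real c + 1)"
    proof -
      have "x (m j) \<in> X" using xX by simp
      then show ?thesis using fej pA d unfolding unif_GH_fejer_def p_def
        apply -
        apply (drule spec[where x=c], drule spec[where x=N], drule spec[where x="g N"])
        apply (drule bspec[where x="x (m j)"], assumption)
        by simp
    qed
    also have "\<dots> \<le> 2 / (real c + 1)" using Gd by simp
    also have "\<dots> = 1 / (real (\<beta> (2 * k + 1)) + 1)" by (simp add: c_def field_simps)
    finally have Hl: "H (dist (x (N + d)) p) \<le> 1 / (real (\<beta> (2 * k + 1)) + 1)" by (rule less_imp_le)
    have "\<forall>k. \<forall>a\<ge>0. H a \<le> 1 / (real (\<beta> k) + 1) \<longrightarrow> a \<le> 1 / (real k + 1)"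
      using Hm unfolding H_modulus_def .
    from this[rule_format, where k="2*k+1" and a="dist (x (N + d)) p", OF zero_le_dist Hl]
    have "dist (x (N + d)) p \<le> 1 / (real (2 * k + 1) + 1)" .
    moreover have "real (2 * k + 1) + 1 = 2 * real k + 2" by simp
    ultimately show ?thesis using d by (simp add: add.commute)
  qed
  have "N \<le> Q (\<gamma> (\<alpha> c))" unfolding N_def
  proof -
    have "i \<le> \<gamma> (\<alpha> c)" using ij by linarith
    then show "m i \<le> Q (\<gamma> (\<alpha> c))" using mle[of i] Qmono[of i "\<gamma> (\<alpha> c)"] by linarith
  qed
  moreover have "Q (\<gamma> (\<alpha> c)) = Psi k g \<Phi> chi \<alpha> \<beta> \<gamma>" by (simp add: Q_def Psi_def c_def)
  moreover have "dist (x a) (x b) \<le> 1 / (real k + 1)"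
    if "N \<le> a \<and> a \<le> N + g N \<and> N \<le> b \<and> b \<le> N + g N" for a b
  proof -
    have "dist (x a) (x b) \<le> dist (x a) p + dist (x b) p" by (rule dist_triangle2)
    also have "\<dots> \<le> 1 / (2 * real k + 2) + 1 / (2 * real k + 2)"
      using close[of a] close[of b] that by (intro add_mono) auto
    also have "\<dots> = 1 / (real k + 1)" by (simp add: field_simps)
    finally show ?thesis .
  qed
  ultimately show ?thesis by auto
qed

theorem theorem5p1:
  fixes X F :: "'a::metric_space set" and Ft :: "nat \<Rightarrow> 'a set"
    and \<gamma> \<alpha> \<beta> \<Phi> :: "nat \<Rightarrow> nat" and G H :: "real \<Rightarrow> real"
    and x :: "nat \<Rightarrow> 'a" and chi :: "nat \<Rightarrow> nat \<Rightarrow> nat \<Rightarrow> nat"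
  assumes "II_modulus X \<gamma>"
    and "F \<noteq> {}" and "F \<subseteq> X" and "is_representation X F Ft"
    and "\<forall>a\<ge>0. G a \<ge> 0" and "\<forall>a\<ge>0. H a \<ge> 0"
    and "G_modulus G \<alpha>" and "H_modulus H \<beta>"
    and "\<forall>n. x n \<in> X"
    and "unif_GH_fejer X Ft G H x chi"
    and "has_approx_F_points Ft x" and "approx_F_point_bound Ft x \<Phi>"
  shows "Cauchy x \<and>
    (\<forall>k g. \<exists>N \<le> Psi k g \<Phi> chi \<alpha> \<beta> \<gamma>.
       \<forall>i j. N \<le> i \<and> i \<le> N + g N \<and> N \<le> j \<and> j \<le> N + g N \<longrightarrow>
         dist (x i) (x j) \<le> 1 / (real k + 1))"
proof -
  have Q: "\<And>k g. \<exists>N \<le> Psi k g \<Phi> chi \<alpha> \<beta> \<gamma>.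
       \<forall>i j. N \<le> i \<and> i \<le> N + g N \<and> N \<le> j \<and> j \<le> N + g N \<longrightarrow>
         dist (x i) (x j) \<le> 1 / (real k + 1)"
    by (rule quant[OF assms(1,7,8,9,10,12)])
  have "Cauchy x"
  proof (rule ccontr)
    assume "\<not> Cauchy x"
    then obtain e where e: "e > 0" "\<forall>M. \<exists>a\<ge>M. \<exists>b\<ge>M. dist (x a) (x b) \<ge> e"
      unfolding Cauchy_def by (metis not_le)
    then obtain fa fb where f: "\<And>M. fa M \<ge> M \<and> fb M \<ge> M \<and> dist (x (fa M)) (x (fb M)) \<ge> e"
      by metis
    obtain k :: nat where k: "1 / (real k + 1) < e"
      using e(1) by (metis add.commute nat_approx_posE of_nat_Suc)
    define g where "g M = fa M + fb M" for M
    obtain N where "\<forall>i j. N \<le> i \<and> i \<le> N + g N \<and> N \<le> j \<and> j \<le> N + g N \<longrightarrow>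
         dist (x i) (x j) \<le> 1 / (real k + 1)" using Q by blast
    then have "dist (x (fa N)) (x (fb N)) \<le> 1 / (real k + 1)" using f[of N] by (auto simp: g_def)
    then show False using f[of N] k by linarith
  qed
  then show ?thesis using Q by blast
qed

end
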